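(* Let $\pi\colon\mathcal W\to W$ be a continuous proper surjection between locally compact Hausdorff spaces, $C$ a co-meagre subset of $W$, and $\iota\colon C\to\mathcal W$ a continuous map with $\pi\circ\iota=\mathrm{id}_C$ and $\iota(C)$ dense in $\mathcal W$. Then $\pi$ and $\iota$ are weakly open.
   Context: A continuous map $f\colon Y\to X$ is weakly open if $f^{-1}(U)$ is dense in $Y$ whenever $U$ is open and dense in $X$. A set is co-meagre if its complement is a countable union of sets whose closures have empty interior. *)

theory Defs
  imports "HOL-Analysis.Analysis"
begin

definition nowhere_dense_in :: "'a topology \<Rightarrow> 'a set \<Rightarrow> bool" where
  "nowhere_dense_in X N \<longleftrightarrow> N \<subseteq> topspace X \<and> X interior_of (X closure_of N) = {}"

definition comeagre_in :: "'a topology \<Rightarrow> 'a set \<Rightarrow> bool" where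
  "comeagre_in X C \<longleftrightarrow> C \<subseteq> topspace X \<and>
     (\<exists>\<F>. countable \<F> \<and> (\<forall>N\<in>\<F>. nowhere_dense_in X N) \<and> topspace X - C = \<Union>\<F>)"

definition dense_in_space :: "'a topology \<Rightarrow> 'a set \<Rightarrow> bool" where
  "dense_in_space X S \<longleftrightarrow> S \<subseteq> topspace X \<and> X closure_of S = topspace X"

definition weakly_open_map :: "'a topology \<Rightarrow> 'b topology \<Rightarrow> ('a \<Rightarrow> 'b) \<Rightarrow> bool" where
  "weakly_open_map Y X f \<longleftrightarrow> continuous_map Y X f \<and>
     (\<forall>U. openin X U \<and> dense_in_space X U \<longrightarrow>
          dense_in_space Y {y \<in> topspace Y. f y \<in> U})"

end

theory Submission
  imports Defs
begin

lemma comeagre_meets: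
  assumes "locally_compact_space W" "Hausdorff_space W" "comeagre_in W C"
    and "openin W Q" "Q \<noteq> {}"
  shows "C \<inter> Q \<noteq> {}"
proof
  assume CO: "C \<inter> Q = {}"
  have "\<exists>F. countable F \<and> (\<forall>N\<in>F. nowhere_dense_in W N) \<and> topspace W - C = \<Union>F"
    using assms(3) unfolding comeagre_in_def by (rule conjunct2)
  then obtain F where F: "countable F" "\<forall>N\<in>F. nowhere_dense_in W N" "topspace W - C = \<Union>F"
    by (elim exE conjE)
  have reg: "locally_compact_space W \<and> regular_space W"
    using assms(1) locally_compact_Hausdorff_imp_regular_space[OF assms(1,2)] by blast
  have "W interior_of \<Union>((closure_of) W ` F) = {}"
  proof (rule Baire_category_alt)
    show "completely_metrizable_space W \<or> locally_compact_space W \<and> regular_space W"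
      using reg by blast
    show "countable ((closure_of) W ` F)" using F(1) by (rule countable_image)
    fix T assume "T \<in> (closure_of) W ` F"
    then obtain N where N: "N \<in> F" "T = W closure_of N" by blast
    show "closedin W T \<and> W interior_of T = {}"
      using F(2) N by (simp add: nowhere_dense_in_def)
  qed
  moreover have "Q \<subseteq> \<Union>((closure_of) W ` F)"
  proof
    fix x assume "x \<in> Q"
    then have "x \<in> topspace W - C" using CO openin_subset[OF assms(4)] by auto
    then obtain N where "N \<in> F" "x \<in> N" using F(3) by auto
    moreover have "N \<subseteq> topspace W" using F(2) \<open>N \<in> F\<close> by (auto simp: nowhere_dense_in_def)
    ultimately have "x \<in> W closure_of N" using closure_of_subset by blast
    then show "x \<in> \<Union>((closure_of) W ` F)" using \<open>N \<in> F\<close> by blast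
  qed
  then have "Q \<subseteq> W interior_of \<Union>((closure_of) W ` F)"
    using interior_of_maximal assms(4) by blast
  ultimately show False using assms(5) by blast
qed

theorem proposition3p11:
  fixes WW :: "'a topology" and W :: "'b topology"
    and \<pi> :: "'a \<Rightarrow> 'b" and \<iota> :: "'b \<Rightarrow> 'a" and C :: "'b set"
  assumes "locally_compact_space WW" and "Hausdorff_space WW"
    and "locally_compact_space W" and "Hausdorff_space W"
    and "continuous_map WW W \<pi>" and "proper_map WW W \<pi>"
    and "\<pi> ` topspace WW = topspace W"
    and "comeagre_in W C"
    and "continuous_map (subtopology W C) WW \<iota>"
    and "\<And>c. c \<in> C \<Longrightarrow> \<pi> (\<iota> c) = c"
    and "dense_in_space WW (\<iota> ` C)"
  shows "weakly_open_map WW W \<pi> \<and> weakly_open_map (subtopology W C) WW \<iota>"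
proof
  have Csub: "C \<subseteq> topspace W" using assms(8) by (simp add: comeagre_in_def)
  have topC: "topspace (subtopology W C) = C" using Csub by auto
  have iotaC: "\<iota> c \<in> topspace WW" if "c \<in> C" for c
    using continuous_map_image_subset_topspace[OF assms(9)] that topC by blast
  have dense: "\<And>T. openin WW T \<Longrightarrow> T \<noteq> {} \<Longrightarrow> \<iota> ` C \<inter> T \<noteq> {}"
    using assms(11) by (simp add: dense_in_space_def dense_intersects_open)
  show "weakly_open_map WW W \<pi>"
    unfolding weakly_open_map_def
  proof (intro conjI allI impI assms(5))
    fix U assume U: "openin W U \<and> dense_in_space W U"
    show "dense_in_space WW {y \<in> topspace WW. \<pi> y \<in> U}"
      unfolding dense_in_space_def dense_intersects_open
    proof (intro conjI allI impI)
      fix V assume V: "openin WW V \<and> V \<noteq> {}"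
      then obtain c where c: "c \<in> C" "\<iota> c \<in> V" using dense by blast
      have "openin (subtopology W C) {x \<in> topspace (subtopology W C). \<iota> x \<in> V}"
        using openin_continuous_map_preimage[OF assms(9)] V by blast
      then obtain Q where Q: "openin W Q" "{x \<in> C. \<iota> x \<in> V} = Q \<inter> C"
        unfolding openin_subtopology topC by blast
      have "c \<in> Q" using Q(2) c by blast
      have "Q \<inter> U \<noteq> {}"
        using U Q(1) \<open>c \<in> Q\<close> by (auto simp: dense_in_space_def dense_intersects_open)
      then obtain c' where "c' \<in> C" "c' \<in> Q" "c' \<in> U"
        using comeagre_meets[OF assms(3,4,8), of "Q \<inter> U"] Q(1) U by blast
      then have "\<iota> c' \<in> V" "\<pi> (\<iota> c') \<in> U" using Q(2) assms(10) by auto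
      then show "{y \<in> topspace WW. \<pi> y \<in> U} \<inter> V \<noteq> {}"
        using iotaC[OF \<open>c' \<in> C\<close>] by blast
    qed auto
  qed
  show "weakly_open_map (subtopology W C) WW \<iota>"
    unfolding weakly_open_map_def
  proof (intro conjI allI impI assms(9))
    fix U assume U: "openin WW U \<and> dense_in_space WW U"
    show "dense_in_space (subtopology W C) {y \<in> topspace (subtopology W C). \<iota> y \<in> U}"
      unfolding dense_in_space_def dense_intersects_open
    proof (intro conjI allI impI)
      fix T assume T: "openin (subtopology W C) T \<and> T \<noteq> {}"
      then obtain Q where Q: "openin W Q" "T = Q \<inter> C" by (auto simp: openin_subtopology)
      then obtain c where c: "c \<in> C" "c \<in> Q" using T by auto
      have P: "openin WW {x \<in> topspace WW. \<pi> x \<in> Q}"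
        using openin_continuous_map_preimage[OF assms(5) Q(1)] by blast
      have "\<iota> c \<in> {x \<in> topspace WW. \<pi> x \<in> Q}" using c iotaC assms(10) by auto
      then have "{x \<in> topspace WW. \<pi> x \<in> Q} \<inter> U \<noteq> {}"
        using U P by (auto simp: dense_in_space_def dense_intersects_open)
      moreover have "openin WW ({x \<in> topspace WW. \<pi> x \<in> Q} \<inter> U)" using P U by auto
      ultimately obtain c' where "c' \<in> C" "\<iota> c' \<in> {x \<in> topspace WW. \<pi> x \<in> Q} \<inter> U"
        using dense by blast
      then have "c' \<in> T" "\<iota> c' \<in> U" using Q(2) assms(10) by auto
      then show "{y \<in> topspace (subtopology W C). \<iota> y \<in> U} \<inter> T \<noteq> {}"
        using \<open>c' \<in> C\<close> topC by blast
    qed (use topC in auto)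
  qed
qed

end
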